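(* Under the hypotheses in the context (decomposition of $\mathcal X$ over $A$, $g\in\mathcal G_s$, integer $T>0$, and $\operatorname{argmin}_{u\in\mathcal U} J^*_{t+1}(Ax+Bu)\cap[\bigoplus_{i\in\mathcal I}\mathcal E_i]\neq\emptyset$ for all $x\in\mathcal X$, $t\in\{0,\dots,T-1\}$), for every $i\in\mathcal I$ the restriction of the optimal cost $J^*$ of $(A,B,g,T)$ to $\mathcal X_i$ equals the optimal cost $\bar J_i^*$ of the subproblem $(A,B|_{\mathcal E_i},g,T)$.
   Context: Let $\mathcal F$ be a field and $\mathcal X,\mathcal U$ finite-dimensional vector spaces over $\mathcal F$. Let $A:\mathcal X\to\mathcal X$ and $B:\mathcal U\to\mathcal X$ be linear maps with $B$ injective, and let $g:\mathcal X\to\mathbb R_{\ge0}$ satisfy $g(x)=0\iff x=0$. Standing assumption: all minima appearing below are attained. For the finite-horizon problem $(A,B,g,T)$ associated with $x_{t+1}=Ax_t+Bu_t$ (cost $\sum_{t=0}^Tg(x_t)$ minimized over $u_0,\dots,u_{T-1}\in\mathcal U$), the cost-to-go functions are $J^*_T=g$ and $J^*_t(x)=g(x)+\min_{u\in\mathcal U}J^*_{t+1}(Ax+Bu)$; the optimal cost is $J^*=J^*_0$. A decomposition of $\mathcal X$ over $A$ is a direct sum $\mathcal X=\mathcal X_1\oplus\cdots\oplus\mathcal X_r$ with $r>1$ and $A\mathcal X_i\subseteq\mathcal X_i$ for all $i\in\mathcal I=\{1,\dots,r\}$; $\rho_i:\mathcal X\to\mathcal X_i$ is the projection along the other summands.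 $\mathcal G_s$ is the set of $h:\mathcal X\to\mathbb R_{\ge0}$ with $h(x)=\sum_i h(\rho_i(x))$ for all $x$. $\mathcal E_i=\{u\in\mathcal U:Bu\in\mathcal X_i\}$. Subproblem $(A,B|_{\mathcal E_i},g,T)$: system $x_{i,t+1}=Ax_{i,t}+B\bar u_{i,t}$ with states in $\mathcal X_i$ and inputs in $\mathcal E_i$, cost $\sum_{t=0}^Tg(x_{i,t})$; its optimal cost is $\bar J_i^*$ (equivalently $\bar J^*_{i,0}$ where $\bar J^*_{i,T}=g|_{\mathcal X_i}$ and $\bar J^*_{i,t}(z)=g(z)+\min_{u\in\mathcal E_i}\bar J^*_{i,t+1}(Az+Bu)$). *)

theory Defs
  imports Complex_Main
begin

text \<open>Direct-sum decomposition of the state space X (the whole type 'x) into the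
  subspaces Xs 1, ..., Xs r (r > 1), each invariant under A.\<close>
definition is_decomposition ::
  "('f::field \<Rightarrow> 'x::ab_group_add \<Rightarrow> 'x) \<Rightarrow> ('x \<Rightarrow> 'x) \<Rightarrow> nat \<Rightarrow> (nat \<Rightarrow> 'x set) \<Rightarrow> bool" where
  "is_decomposition scale A r Xs \<longleftrightarrow>
     r > 1 \<and>
     (\<forall>i\<in>{1..r}. module.subspace scale (Xs i)) \<and>
     (\<forall>i\<in>{1..r}. A ` Xs i \<subseteq> Xs i) \<and>
     (\<forall>x. \<exists>f. (\<forall>i\<in>{1..r}. f i \<in> Xs i) \<and> x = (\<Sum>i\<in>{1..r}. f i)) \<and>
     (\<forall>f. (\<forall>i\<in>{1..r}. f i \<in> Xs i) \<and> (\<Sum>i\<in>{1..r}. f i) = 0 \<longrightarrow> (\<forall>i\<in>{1..r}. f i = 0))"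

definition proj :: "nat \<Rightarrow> (nat \<Rightarrow> 'x::ab_group_add set) \<Rightarrow> nat \<Rightarrow> 'x \<Rightarrow> 'x" where
  "proj r Xs i x = (THE y. \<exists>f. (\<forall>j\<in>{1..r}. f j \<in> Xs j) \<and> x = (\<Sum>j\<in>{1..r}. f j) \<and> f i = y)"

definition separable :: "nat \<Rightarrow> (nat \<Rightarrow> 'x::ab_group_add set) \<Rightarrow> ('x \<Rightarrow> real) \<Rightarrow> bool" where
  "separable r Xs h \<longleftrightarrow> (\<forall>x. h x \<ge> 0) \<and> (\<forall>x. h x = (\<Sum>i\<in>{1..r}. h (proj r Xs i x)))"

text \<open>Cost-to-go with k steps remaining and inputs restricted to the set U:
  ctg 0 = g, ctg (k+1) x = g x + min_{u\<in>U} ctg k (A x + B u).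
  Thus J*_t = ctg (T - t) and J* = J*_0 = ctg T.  The minimum is written as an
  infimum; under the standing assumption it is attained.\<close>
fun ctg :: "('x::ab_group_add \<Rightarrow> 'x) \<Rightarrow> ('u \<Rightarrow> 'x) \<Rightarrow> ('x \<Rightarrow> real) \<Rightarrow> 'u set \<Rightarrow> nat \<Rightarrow> 'x \<Rightarrow> real" where
  "ctg A B g U 0 x = g x"
| "ctg A B g U (Suc k) x = g x + Inf ((\<lambda>u. ctg A B g U k (A x + B u)) ` U)"

definition Espace :: "('u \<Rightarrow> 'x) \<Rightarrow> 'x set \<Rightarrow> 'u set" where
  "Espace B Xi = {u. B u \<in> Xi}"

text \<open>The sum (direct, since B is injective) of the E_i.\<close>
definition Esum :: "('u::ab_group_add \<Rightarrow> 'x) \<Rightarrow> nat \<Rightarrow> (nat \<Rightarrow> 'x set) \<Rightarrow> 'u set" where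
  "Esum B r Xs = {\<Sum>i\<in>{1..r}. f i | f. \<forall>i\<in>{1..r}. f i \<in> Espace B (Xs i)}"

end

theory Submission
  imports Defs
begin

theorem corollary2:
  fixes scaleX :: "'f::field \<Rightarrow> 'x::ab_group_add \<Rightarrow> 'x"
    and scaleU :: "'f \<Rightarrow> 'u::ab_group_add \<Rightarrow> 'u"
    and A :: "'x \<Rightarrow> 'x" and B :: "'u \<Rightarrow> 'x" and g :: "'x \<Rightarrow> real"
    and r :: nat and Xs :: "nat \<Rightarrow> 'x set" and T :: nat
  assumes fdX: "\<exists>b. finite_dimensional_vector_space scaleX b"
    and fdU: "\<exists>b. finite_dimensional_vector_space scaleU b"
    and linA: "Vector_Spaces.linear scaleX scaleX A"
    and linB: "Vector_Spaces.linear scaleU scaleX B"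
    and injB: "inj B"
    and g_nonneg: "\<forall>x. g x \<ge> 0"
    and g_zero: "\<forall>x. g x = 0 \<longleftrightarrow> x = 0"
    and decomp: "is_decomposition scaleX A r Xs"
    and g_sep: "separable r Xs g"
    and T_pos: "T > 0"
    and attained: "\<forall>t<T. \<forall>x. \<exists>u. \<forall>v.
         ctg A B g UNIV (T - Suc t) (A x + B u) \<le> ctg A B g UNIV (T - Suc t) (A x + B v)"
    and attained_sub: "\<forall>i\<in>{1..r}. \<forall>t<T. \<forall>z\<in>Xs i. \<exists>u\<in>Espace B (Xs i). \<forall>v\<in>Espace B (Xs i).
         ctg A B g (Espace B (Xs i)) (T - Suc t) (A z + B u)
           \<le> ctg A B g (Espace B (Xs i)) (T - Suc t) (A z + B v)"
    and argmin_hyp: "\<forall>x. \<forall>t<T. \<exists>u\<in>Esum B r Xs. \<forall>v.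
         ctg A B g UNIV (T - Suc t) (A x + B u) \<le> ctg A B g UNIV (T - Suc t) (A x + B v)"
  shows "\<forall>i\<in>{1..r}. \<forall>x\<in>Xs i. ctg A B g UNIV T x = ctg A B g (Espace B (Xs i)) T x"
proof -
  have hA: "module_hom scaleX scaleX A" using linA by (simp add: linear_iff_module_hom)
  have hB: "module_hom scaleU scaleX B" using linB by (simp add: linear_iff_module_hom)
  have modX: "module scaleX" using hA by (simp add: module_hom_def)
  have Aadd: "\<And>a b. A (a + b) = A a + A b" using hA module_hom.add by blast
  have Badd: "\<And>a b. B (a + b) = B a + B b" using hB module_hom.add by blast
  have Asum: "\<And>f S. A (sum f S) = (\<Sum>a\<in>S. A (f a))" using hA module_hom.sum by blast
  have Bsum: "\<And>f S. B (sum f S) = (\<Sum>a\<in>S. B (f a))" using hB module_hom.sum by blast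
  have B0: "B 0 = 0" using hB module_hom.zero by blast
  have r1: "r > 1" and sub: "\<And>i. i \<in> {1..r} \<Longrightarrow> module.subspace scaleX (Xs i)"
    and inv: "\<And>i x. i \<in> {1..r} \<Longrightarrow> x \<in> Xs i \<Longrightarrow> A x \<in> Xs i"
    and ex: "\<And>x. \<exists>f. (\<forall>i\<in>{1..r}. f i \<in> Xs i) \<and> x = (\<Sum>i\<in>{1..r}. f i)"
    and uq: "\<And>f. (\<forall>i\<in>{1..r}. f i \<in> Xs i) \<Longrightarrow> (\<Sum>i\<in>{1..r}. f i) = 0 \<Longrightarrow> (\<forall>i\<in>{1..r}. f i = 0)"
    using decomp unfolding is_decomposition_def by blast+
  have z0: "\<And>i. i \<in> {1..r} \<Longrightarrow> 0 \<in> Xs i" using sub module.subspace_0[OF modX] by blast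
  have sdiff: "\<And>i x y. i \<in> {1..r} \<Longrightarrow> x \<in> Xs i \<Longrightarrow> y \<in> Xs i \<Longrightarrow> x - y \<in> Xs i"
    using sub module.subspace_diff[OF modX] by blast
  have sadd: "\<And>i x y. i \<in> {1..r} \<Longrightarrow> x \<in> Xs i \<Longrightarrow> y \<in> Xs i \<Longrightarrow> x + y \<in> Xs i"
    using sub module.subspace_add[OF modX] by blast
  have projeq: "proj r Xs i x = f i"
    if "i \<in> {1..r}" "\<forall>j\<in>{1..r}. f j \<in> Xs j" "x = (\<Sum>j\<in>{1..r}. f j)" for i x f
  proof -
    note fin = that
    have "\<forall>j\<in>{1..r}. f' j = f j"
      if f': "\<forall>j\<in>{1..r}. f' j \<in> Xs j" "x = (\<Sum>j\<in>{1..r}. f' j)" for f'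
    proof -
      have "\<forall>j\<in>{1..r}. (\<lambda>j. f' j - f j) j \<in> Xs j" using f' fin sdiff by auto
      moreover have "(\<Sum>j\<in>{1..r}. f' j - f j) = 0"
        using f' fin by (simp add: sum_subtractf)
      ultimately have "\<forall>j\<in>{1..r}. f' j - f j = 0" using uq[of "\<lambda>j. f' j - f j"] by simp
      thus ?thesis by simp
    qed
    hence "\<And>y. (\<exists>f'. (\<forall>j\<in>{1..r}. f' j \<in> Xs j) \<and> x = (\<Sum>j\<in>{1..r}. f' j) \<and> f' i = y) \<Longrightarrow> y = f i"
      using that(1) by blast
    moreover have "\<exists>f'. (\<forall>j\<in>{1..r}. f' j \<in> Xs j) \<and> x = (\<Sum>j\<in>{1..r}. f' j) \<and> f' i = f i"
      using that by blast
    ultimately show ?thesis unfolding proj_def by (rule the_equality[rotated])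
  qed
  have proj_self: "proj r Xs i x = x" if "i \<in> {1..r}" "x \<in> Xs i" for i x
  proof -
    have "\<forall>j\<in>{1..r}. (\<lambda>j. if j = i then x else 0) j \<in> Xs j" using that z0 by auto
    moreover have "x = (\<Sum>j\<in>{1..r}. (\<lambda>j. if j = i then x else 0) j)"
      using that by (simp add: sum.delta)
    ultimately show ?thesis using projeq[OF that(1)] by fastforce
  qed
  have gsep: "\<And>x. g x = (\<Sum>i\<in>{1..r}. g (proj r Xs i x))" using g_sep unfolding separable_def by blast
  have gproj: "g (proj r Xs i x) \<le> g x" if "i \<in> {1..r}" for i x
  proof -
    have "g (proj r Xs i x) \<le> (\<Sum>j\<in>{1..r}. g (proj r Xs j x))"
      by (rule member_le_sum) (use that g_nonneg in auto)
    thus ?thesis using gsep[of x] by simp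
  qed
  have nonneg: "0 \<le> ctg A B g U k x" if "U \<noteq> {}" for U k x
    using that
  proof (induction k arbitrary: x)
    case 0 thus ?case using g_nonneg by simp
  next
    case (Suc k)
    have "0 \<le> Inf ((\<lambda>u. ctg A B g U k (A x + B u)) ` U)"
      using Suc by (intro cInf_greatest) auto
    thus ?case using g_nonneg by simp
  qed
  show ?thesis
  proof (intro ballI)
    fix i x assume i: "i \<in> {1..r}" and x: "x \<in> Xs i"
    let ?E = "Espace B (Xs i)"
    have E0: "0 \<in> ?E" unfolding Espace_def using B0 z0[OF i] by simp
    hence Ene: "?E \<noteq> {}" by blast
    have le: "ctg A B g UNIV k y \<le> ctg A B g ?E k y" for k y
    proof (induction k arbitrary: y)
      case 0 thus ?case by simp
    next
      case (Suc k)
      have bdd: "bdd_below ((\<lambda>u. ctg A B g UNIV k (A y + B u)) ` UNIV)"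
        using nonneg[of UNIV] by (intro bdd_belowI[of _ 0]) auto
      have "Inf ((\<lambda>u. ctg A B g UNIV k (A y + B u)) ` UNIV)
          \<le> Inf ((\<lambda>u. ctg A B g ?E k (A y + B u)) ` ?E)"
      proof (rule cInf_greatest)
        show "(\<lambda>u. ctg A B g ?E k (A y + B u)) ` ?E \<noteq> {}" using Ene by blast
      next
        fix z assume "z \<in> (\<lambda>u. ctg A B g ?E k (A y + B u)) ` ?E"
        then obtain u where z: "z = ctg A B g ?E k (A y + B u)" by blast
        have "Inf ((\<lambda>u. ctg A B g UNIV k (A y + B u)) ` UNIV) \<le> ctg A B g UNIV k (A y + B u)"
          by (rule cInf_lower[OF _ bdd]) auto
        also have "\<dots> \<le> z" using Suc z by simp
        finally show "Inf ((\<lambda>u. ctg A B g UNIV k (A y + B u)) ` UNIV) \<le> z" .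
      qed
      thus ?case by simp
    qed
    have ge: "k \<le> T \<Longrightarrow> ctg A B g ?E k (proj r Xs i y) \<le> ctg A B g UNIV k y" for k y
    proof (induction k arbitrary: y)
      case 0 thus ?case using gproj[OF i] by simp
    next
      case (Suc k)
      define t where "t = T - Suc k"
      have t: "t < T" "T - Suc t = k" using Suc.prems unfolding t_def by auto
      obtain u where uE: "u \<in> Esum B r Xs" and umin: "\<forall>v. ctg A B g UNIV k (A y + B u) \<le> ctg A B g UNIV k (A y + B v)"
        using argmin_hyp t by metis
      have infeq: "Inf ((\<lambda>u. ctg A B g UNIV k (A y + B u)) ` UNIV) = ctg A B g UNIV k (A y + B u)"
        using umin by (intro cInf_eq_minimum) auto
      obtain h where h: "\<forall>j\<in>{1..r}. h j \<in> Espace B (Xs j)" and uh: "u = (\<Sum>j\<in>{1..r}. h j)"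
        using uE unfolding Esum_def by blast
      obtain f where f: "\<forall>j\<in>{1..r}. f j \<in> Xs j" and yf: "y = (\<Sum>j\<in>{1..r}. f j)" using ex by blast
      have py: "proj r Xs i y = f i" using projeq[OF i f yf] .
      have "A y + B u = (\<Sum>j\<in>{1..r}. A (f j) + B (h j))"
        unfolding yf uh Asum Bsum by (simp add: sum.distrib)
      moreover have "\<forall>j\<in>{1..r}. A (f j) + B (h j) \<in> Xs j"
        using f h inv sadd unfolding Espace_def by blast
      ultimately have pAB: "proj r Xs i (A y + B u) = A (f i) + B (h i)"
        using projeq[OF i, of "\<lambda>j. A (f j) + B (h j)" "A y + B u"] by simp
      have hi: "h i \<in> ?E" using h i by blast
      have bdd: "bdd_below ((\<lambda>u. ctg A B g ?E k (A (f i) + B u)) ` ?E)"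
        using nonneg[OF Ene] by (intro bdd_belowI[of _ 0]) auto
      have "Inf ((\<lambda>u. ctg A B g ?E k (A (f i) + B u)) ` ?E) \<le> ctg A B g ?E k (A (f i) + B (h i))"
        by (rule cInf_lower[OF _ bdd]) (use hi in auto)
      also have "\<dots> \<le> ctg A B g UNIV k (A y + B u)"
        using Suc.IH[of "A y + B u"] Suc.prems pAB by simp
      finally have "Inf ((\<lambda>u. ctg A B g ?E k (A (f i) + B u)) ` ?E) \<le> ctg A B g UNIV k (A y + B u)" .
      moreover have "g (f i) \<le> g y" using gproj[OF i, of y] py by simp
      ultimately show ?case using infeq py by simp
    qed
    show "ctg A B g UNIV T x = ctg A B g ?E T x"
      using le[of T x] ge[of T x] proj_self[OF i x] by simp
  qed
qed

end
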